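(* Let $f(z)=z+\sum_{k=2}^{\infty}a_kz^k$ be analytic in $\mathbb{D}=\{z:|z|<1\}$ with $zf'(z)-f(z)=\frac12 z^2\phi(z)$ for all $z\in\mathbb{D}$, where $\phi$ is analytic in $\mathbb{D}$ and $|\phi(z)|\le1$, and let $s_n(z;f)=z+\sum_{k=2}^n a_kz^k$. Then for each $r\in(0,1)$ and $n\ge2$, \[\left|\frac{s_n'(z;f)}{f'(z)}-1\right|\le |z|^n\left(\frac{n+1}{2n}+B_n\frac{|z|}{r-|z|}\right),\qquad |z|<r,\] where $B_n=\dfrac{\sqrt{2r-r^2}}{2(1-r)r^n}\bigl(n+1+\ln(n-1)+\gamma\bigr)$ and $\gamma\approx0.57722$ is the Euler–Mascheroni constant. *)

theory Defs
  imports "HOL-Analysis.Analysis"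
begin

definition taylor_coef :: "(complex \<Rightarrow> complex) \<Rightarrow> nat \<Rightarrow> complex" where
  "taylor_coef f k = (deriv ^^ k) f 0 / of_nat (fact k)"

definition partial_sum :: "(complex \<Rightarrow> complex) \<Rightarrow> nat \<Rightarrow> complex \<Rightarrow> complex" where
  "partial_sum f n z = z + (\<Sum>k=2..n. taylor_coef f k * z ^ k)"

end

theory Submission
  imports Defs "HOL-Complex_Analysis.Complex_Analysis"
begin


lemma coef_bound:
  fixes f \<phi> :: "complex \<Rightarrow> complex"
  assumes holf: "f holomorphic_on ball 0 1"
    and hphi: "\<forall>w\<in>ball 0 1. norm (\<phi> w) \<le> 1"
    and eq: "\<forall>w\<in>ball 0 1. w * deriv f w - f w = 1/2 * w^2 * \<phi> w"
    and k: "k \<ge> 2"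
  shows "norm ((of_nat k - 1) * (deriv ^^ k) f 0) \<le> fact k / 2"
proof -
  define G where "G = (\<lambda>w. w * deriv f w - f w)"
  have hd: "deriv f holomorphic_on ball 0 1" using holf by (simp add: holomorphic_deriv)
  have hG: "G holomorphic_on ball 0 1" unfolding G_def
    by (intro holomorphic_intros hd holf)
  have k1: "k = Suc (k - 1)" using k by simp
  have "(deriv ^^ k) G 0 = (deriv ^^ k) (\<lambda>w. w * deriv f w) 0 - (deriv ^^ k) f 0"
    unfolding G_def by (rule higher_deriv_diff) (auto intro!: holomorphic_intros hd holf)
  also have "(deriv ^^ k) (\<lambda>w. w * deriv f w) 0 =
       (\<Sum>i = 0..k. of_nat (k choose i) * (deriv ^^ i) (\<lambda>w. w) 0 * (deriv ^^ (k-i)) (deriv f) 0)"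
    by (rule higher_deriv_mult[where S="ball 0 1"]) (auto intro!: holomorphic_intros hd)
  also have "\<dots> = (\<Sum>i = 0..k. if i = 1 then of_nat k * (deriv ^^ (k-1)) (deriv f) 0 else 0)"
    by (rule sum.cong) auto
  also have "\<dots> = of_nat k * (deriv ^^ (k-1)) (deriv f) 0" using k by simp
  also have "(deriv ^^ (k-1)) (deriv f) = (deriv ^^ k) f"
    by (subst (2) k1, subst funpow_Suc_right) simp
  finally have Gk: "(deriv ^^ k) G 0 = (of_nat k - 1) * (deriv ^^ k) f 0"
    by (simp add: algebra_simps)
  have bnd: "norm ((of_nat k - 1) * (deriv ^^ k) f 0) \<le> fact k * (\<rho>^2/2) / \<rho>^k"
    if "0 < \<rho>" "\<rho> < 1" for \<rho> :: real
  proof -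
    have "norm ((deriv ^^ k) G 0) \<le> fact k * (\<rho>^2/2) / \<rho>^k"
    proof (rule Cauchy_inequality)
      show "G holomorphic_on ball 0 \<rho>" using that by (intro holomorphic_on_subset[OF hG]) auto
      show "continuous_on (cball 0 \<rho>) G"
        using that by (intro continuous_on_subset[OF holomorphic_on_imp_continuous_on[OF hG]]) auto
      show "0 < \<rho>" by fact
      fix x :: complex assume x: "norm (0 - x) = \<rho>"
      then have xb: "x \<in> ball 0 1" using that by auto
      have "norm (G x) = 1/2 * norm x ^ 2 * norm (\<phi> x)"
        using eq xb unfolding G_def by (simp only: norm_mult norm_power) simp
      also have "\<dots> \<le> 1/2 * norm x ^ 2 * 1"
        using hphi xb by (intro mult_left_mono) auto
      finally show "norm (G x) \<le> \<rho>^2/2" using x by simp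
    qed
    then show ?thesis using Gk by simp
  qed
  have lim: "((\<lambda>\<rho>::real. fact k * (\<rho>^2/2) / \<rho>^k) \<longlongrightarrow> fact k * (1^2/2) / 1^k) (at_left 1)"
    by (intro tendsto_intros) auto
  then have lim: "((\<lambda>\<rho>::real. fact k * (\<rho>^2/2) / \<rho>^k) \<longlongrightarrow> fact k / 2) (at_left 1)"
    by simp
  show ?thesis
  proof (rule tendsto_le[OF _ lim tendsto_const])
    show "at_left (1::real) \<noteq> bot" by simp
    show "\<forall>\<^sub>F \<rho> in at_left 1. norm ((of_nat k - 1) * (deriv ^^ k) f 0) \<le> fact k * (\<rho>^2/2) / \<rho>^k"
      using eventually_at_left_real[of 0 1] by (rule eventually_mono) (use bnd in auto)
  qed
qed



lemma deriv_lower: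
  fixes f \<phi> :: "complex \<Rightarrow> complex"
  assumes holf: "f holomorphic_on ball 0 1"
    and f0: "f 0 = 0" and f1: "deriv f 0 = 1"
    and hphi: "\<forall>w\<in>ball 0 1. norm (\<phi> w) \<le> 1"
    and eq: "\<forall>w\<in>ball 0 1. w * deriv f w - f w = 1/2 * w^2 * \<phi> w"
    and z: "norm z < 1"
  shows "norm (deriv f z) \<ge> 1 - norm z"
proof -
  define g where "g = (\<lambda>w. if w = 0 then deriv f 0 else (f w - f 0) / (w - 0))"
  have hg: "g holomorphic_on ball 0 1" unfolding g_def
    by (rule pole_lemma[OF holf]) simp
  have gw: "g w = f w / w" if "w \<noteq> 0" for w using that f0 by (simp add: g_def)
  have g0: "g 0 = 1" using f1 by (simp add: g_def)
  have dg: "deriv g w = \<phi> w / 2" if w: "w \<in> ball 0 1" "w \<noteq> 0" for w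
  proof -
    have fd: "(f has_field_derivative deriv f w) (at w)"
      using holf w by (intro holomorphic_derivI) auto
    have "((\<lambda>w. f w / w) has_field_derivative (deriv f w * w - f w * 1) / (w * w)) (at w)"
      using w by (intro DERIV_divide fd DERIV_ident) auto
    then have "(g has_field_derivative (deriv f w * w - f w * 1) / (w * w)) (at w)"
      by (rule has_field_derivative_transform_within_open[where S="ball 0 1 - {0}"])
         (use w gw in auto)
    then have "deriv g w = (deriv f w * w - f w * 1) / (w * w)" by (rule DERIV_imp_deriv)
    also have "\<dots> = (1/2 * w^2 * \<phi> w) / (w * w)" proof -
      have h: "deriv f w * w - f w * 1 = 1/2 * w^2 * \<phi> w" using eq w by (simp add: mult.commute)
      show ?thesis by (simp only: h)
    qed
    also have "\<dots> = \<phi> w / 2" using w by (simp add: power2_eq_square)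
    finally show ?thesis .
  qed
  have dgb: "norm (deriv g w) \<le> 1/2" if w: "w \<in> ball 0 1" "w \<noteq> 0" for w
  proof -
    have "norm (\<phi> w) \<le> 1" using hphi w by auto
    moreover have "norm (deriv g w) = norm (\<phi> w) / 2" unfolding dg[OF w] by (simp add: norm_divide)
    ultimately show ?thesis by linarith
  qed
  have hdg: "deriv g holomorphic_on ball 0 1" using hg by (simp add: holomorphic_deriv)
  have "isCont (deriv g) 0"
    using holomorphic_on_imp_continuous_on[OF hdg] by (simp add: continuous_on_interior)
  then have "(deriv g \<longlongrightarrow> deriv g 0) (at 0)" by (simp add: isCont_def)
  moreover have "\<forall>\<^sub>F w in at 0. norm (deriv g w) \<le> 1/2"
  proof -
    have "\<forall>\<^sub>F w in at (0::complex). w \<in> ball 0 1"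
      by (rule eventually_at_in_open') auto
    moreover have "\<forall>\<^sub>F w in at (0::complex). w \<noteq> 0" by (simp add: eventually_at_filter)
    ultimately show ?thesis by eventually_elim (use dgb in auto)
  qed
  ultimately have dg0: "norm (deriv g 0) \<le> 1/2"
    by (intro Lim_norm_ubound[of "at 0" "deriv g"]) auto
  have "norm (g z - g 0) \<le> 1/2 * norm (z - 0)"
  proof (rule field_differentiable_bound[where S="ball 0 1" and f'="deriv g"])
    show "convex (ball (0::complex) 1)" by simp
    show "(g has_field_derivative deriv g w) (at w within ball 0 1)" if "w \<in> ball 0 1" for w
      using hg that by (intro holomorphic_derivI) auto
    show "norm (deriv g w) \<le> 1/2" if "w \<in> ball 0 1" for w
      using that dgb dg0 by (cases "w = 0") auto
  qed (use z in auto)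
  then have gz: "norm (g z - 1) \<le> norm z / 2" using g0 by simp
  show ?thesis
  proof (cases "z = 0")
    case True then show ?thesis using f1 by simp
  next
    case False
    have "z * deriv f z - f z = 1/2 * z^2 * \<phi> z" using eq z by auto
    then have "z * deriv f z = f z + 1/2 * z^2 * \<phi> z" by (metis diff_eq_eq add.commute)
    then have "deriv f z = f z / z + z * \<phi> z / 2" using False
      by (simp add: field_simps power2_eq_square)
    then have dfz: "deriv f z = 1 + (g z - 1) + z * \<phi> z / 2" using gw[OF False] by simp
    have "norm (z * \<phi> z / 2) \<le> norm z / 2"
      using hphi z by (simp add: norm_mult norm_divide mult_left_le)
    then have "norm ((g z - 1) + z * \<phi> z / 2) \<le> norm z"
      using gz norm_triangle_ineq[of "g z - 1" "z * \<phi> z / 2"] by linarith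
    moreover have "norm (1::complex) - norm (-((g z - 1) + z * \<phi> z / 2))
       \<le> norm (1 - (-((g z - 1) + z * \<phi> z / 2)))" by (rule norm_triangle_ineq2)
    ultimately show ?thesis unfolding dfz norm_minus_cancel diff_minus_eq_add by simp
  qed
qed



lemma partial_sum_deriv:
  fixes f :: "complex \<Rightarrow> complex"
  assumes f0: "f 0 = 0" and f1: "deriv f 0 = 1" and n: "n \<ge> 1"
  shows "deriv (partial_sum f n) z = (\<Sum>m<n. (deriv ^^ Suc m) f 0 / fact m * z^m)"
proof -
  have ps: "partial_sum f n = (\<lambda>w. \<Sum>k<Suc n. taylor_coef f k * w^k)"
  proof
    fix w
    have "{..<Suc n} = {0,1} \<union> {2..n}" using n by auto
    then have "(\<Sum>k<Suc n. taylor_coef f k * w^k) = (\<Sum>k\<in>{0,1}. taylor_coef f k * w^k) + (\<Sum>k=2..n. taylor_coef f k * w^k)"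
      by (simp add: sum.union_disjoint)
    also have "(\<Sum>k\<in>{0,1}. taylor_coef f k * w^k) = w"
      using f0 f1 by (simp add: taylor_coef_def)
    finally show "partial_sum f n w = (\<Sum>k<Suc n. taylor_coef f k * w^k)"
      by (simp add: partial_sum_def)
  qed
  have "((\<lambda>w. \<Sum>k<Suc n. taylor_coef f k * w^k) has_field_derivative
          (\<Sum>k<Suc n. taylor_coef f k * (of_nat k * z^(k-1)))) (at z)"
    by (intro DERIV_sum DERIV_cmult) (use DERIV_power[OF DERIV_ident] in simp)
  then have "deriv (partial_sum f n) z = (\<Sum>k<Suc n. taylor_coef f k * (of_nat k * z^(k-1)))"
    unfolding ps by (rule DERIV_imp_deriv)
  also have "\<dots> = (\<Sum>m<n. taylor_coef f (Suc m) * (of_nat (Suc m) * z^m))"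
    by (subst sum.lessThan_Suc_shift) simp
  also have "\<dots> = (\<Sum>m<n. (deriv ^^ Suc m) f 0 / fact m * z^m)"
  proof (rule sum.cong)
    fix m
    have X: "(of_nat (fact (Suc m)) :: complex) = of_nat (Suc m) * fact m"
      by (simp only: fact_Suc of_nat_mult of_nat_fact of_nat_id)
    have "(of_nat (Suc m) :: complex) \<noteq> 0" by (simp only: of_nat_eq_0_iff)
    moreover have "(fact m :: complex) \<noteq> 0" by simp
    ultimately show "taylor_coef f (Suc m) * (of_nat (Suc m) * z^m) = (deriv ^^ Suc m) f 0 / fact m * z^m"
      unfolding taylor_coef_def X by (simp add: field_simps del: of_nat_Suc)
  qed simp
  finally show ?thesis .
qed



lemma final_ineq:
  fixes t r B :: real and n :: nat
  assumes t0: "0 \<le> t" and tr: "t < r" and r1: "r < 1" and n: "n \<ge> 2"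
    and B: "B \<ge> r * (real n + 1) / (2 * (1 - r))"
  shows "(real n + 1) / (2 * real n) * t^n / (1 - t) / (1 - t)
     \<le> t^n * ((real n + 1) / (2 * real n) + B * t / (r - t))"
proof -
  define c where "c = (real n + 1) / (2 * real n)"
  have c0: "c \<ge> 0" unfolding c_def by simp
  have t1: "t < 1" using tr r1 by simp
  have r0: "0 < r" using t0 tr by simp
  have key1: "(2 - t) * (r - t) * (1 - r) \<le> 2 * r * (1 - t)^2"
  proof -
    have a: "r - t \<le> r * (1 - t)" using t0 r1 mult_right_mono[of r 1 t] by (simp add: algebra_simps)
    have b: "1 - r \<le> 1 - t" using tr by simp
    have "(2 - t) * (r - t) * (1 - r) \<le> (2 - t) * (r * (1 - t)) * (1 - t)"
      using a b t0 t1 tr r1 by (intro mult_mono) auto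
    also have "\<dots> \<le> 2 * (r * (1 - t)) * (1 - t)"
      using t0 t1 r0 by (intro mult_right_mono) auto
    finally show ?thesis by (simp add: power2_eq_square algebra_simps)
  qed
  have key2: "c * (2 - t) * (r - t) \<le> (r * (real n + 1) / (2 * (1 - r))) * (1 - t)^2"
  proof -
    have "c * (2 - t) * (r - t) = (real n + 1) / (2 * real n) * ((2 - t) * (r - t) * (1 - r)) / (1 - r)"
      using r1 by (simp add: c_def)
    also have "\<dots> \<le> (real n + 1) / (2 * real n) * (2 * r * (1 - t)^2) / (1 - r)"
      using key1 r1 by (intro divide_right_mono mult_left_mono) auto
    also have "\<dots> \<le> (real n + 1) / 4 * (2 * r * (1 - t)^2) / (1 - r)"
    proof -
      have "(real n + 1) / (2 * real n) \<le> (real n + 1) / 4"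
        using n by (intro divide_left_mono) auto
      then show ?thesis using r1 r0 by (intro divide_right_mono mult_right_mono) auto
    qed
    also have "\<dots> = (r * (real n + 1) / (2 * (1 - r))) * (1 - t)^2"
      using r1 by (simp add: field_simps)
    finally show ?thesis .
  qed
  have key3: "c / (1 - t)^2 \<le> c + B * t / (r - t)"
  proof -
    have "c / (1 - t)^2 - c = t * (c * (2 - t) * (r - t)) / ((1 - t)^2 * (r - t))"
    proof -
      have h1: "(1 - t)^2 \<noteq> 0" "r - t \<noteq> 0" using t1 tr by auto
      have "c / (1 - t)^2 - c = c * (1 - (1 - t)^2) / (1 - t)^2" using h1 by (simp add: field_simps)
      also have "\<dots> = (c * (1 - (1 - t)^2) * (r - t)) / ((1 - t)^2 * (r - t))"
        using h1 by simp
      also have "c * (1 - (1 - t)^2) * (r - t) = t * (c * (2 - t) * (r - t))"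
        by (simp add: power2_eq_square algebra_simps)
      finally show ?thesis .
    qed
    also have "\<dots> \<le> t * ((r * (real n + 1) / (2 * (1 - r))) * (1 - t)^2) / ((1 - t)^2 * (r - t))"
      using key2 t0 t1 tr by (intro divide_right_mono mult_left_mono) auto
    also have "\<dots> = t * (r * (real n + 1) / (2 * (1 - r))) / (r - t)"
    proof -
      define K where "K = r * (real n + 1) / (2 * (1 - r))"
      have "(1 - t)^2 \<noteq> 0" "r - t \<noteq> 0" using t1 tr by auto
      then have "t * (K * (1 - t)^2) / ((1 - t)^2 * (r - t)) = t * K / (r - t)"
        by (simp add: field_simps)
      then show ?thesis unfolding K_def .
    qed
    also have "\<dots> \<le> t * B / (r - t)"
      using B t0 tr by (intro divide_right_mono mult_left_mono) auto
    finally show ?thesis by (simp add: mult.commute)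
  qed
  have "c * t^n / (1 - t) / (1 - t) = t^n * (c / (1 - t)^2)"
    by (simp add: power2_eq_square)
  also have "\<dots> \<le> t^n * (c + B * t / (r - t))"
    using key3 t0 by (intro mult_left_mono) auto
  finally show ?thesis unfolding c_def .
qed



theorem theorem3p2:
  fixes f \<phi> :: "complex \<Rightarrow> complex" and r :: real and n :: nat and z :: complex
  assumes "f holomorphic_on ball 0 1"
    and "f 0 = 0" and "deriv f 0 = 1"
    and "\<phi> holomorphic_on ball 0 1"
    and "\<forall>w\<in>ball 0 1. norm (\<phi> w) \<le> 1"
    and "\<forall>w\<in>ball 0 1. w * deriv f w - f w = 1/2 * w^2 * \<phi> w"
    and "0 < r" and "r < 1" and "n \<ge> 2"
    and "norm z < r"
  shows "norm (deriv (partial_sum f n) z / deriv f z - 1)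
     \<le> norm z ^ n * ((real n + 1) / (2 * real n)
        + (sqrt (2 * r - r^2) / (2 * (1 - r) * r ^ n)
             * (real n + 1 + ln (real n - 1) + euler_mascheroni))
          * norm z / (r - norm z))"
proof -
  note holf = assms(1) and f0 = assms(2) and f1 = assms(3) and hphi = assms(5) and eq = assms(6)
  define t where "t = norm z"
  define c where "c = (real n + 1) / (2 * real n)"
  define e where "e = (\<lambda>m. (deriv ^^ Suc m) f 0 / fact m)"
  have t0: "0 \<le> t" and tr: "t < r" using assms(10) by (auto simp: t_def)
  have t1: "t < 1" using tr assms(8) by simp
  have zb: "z \<in> ball 0 1" using t1 by (simp add: t_def)
  have hd: "deriv f holomorphic_on ball 0 1" using holf by (simp add: holomorphic_deriv)
  have S: "(\<lambda>m. e m * z^m) sums deriv f z"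
  proof -
    have "(\<lambda>m. (deriv ^^ m) (deriv f) 0 / fact m * (z - 0)^m) sums deriv f z"
      by (rule holomorphic_power_series[OF hd zb])
    moreover have "(deriv ^^ Suc m) f = (deriv ^^ m) (deriv f)" for m
      by (simp only: funpow_Suc_right o_apply)
    ultimately show ?thesis by (simp add: e_def)
  qed
  have sn: "deriv (partial_sum f n) z = (\<Sum>m<n. e m * z^m)"
    unfolding e_def using partial_sum_deriv[OF f0 f1] assms(9) by simp
  have eb: "norm (e m) \<le> c" if m: "m \<ge> n" for m
  proof -
    have "norm ((of_nat (Suc m) - 1) * (deriv ^^ Suc m) f 0) \<le> fact (Suc m) / 2"
      using m assms(9) by (intro coef_bound[OF holf hphi eq]) auto
    then have h: "real m * norm ((deriv ^^ Suc m) f 0) \<le> (real m + 1) * fact m / 2"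
      by (simp add: norm_mult fact_Suc algebra_simps)
    have mpos: "real m > 0" using m assms(9) by simp
    have "norm (e m) = norm ((deriv ^^ Suc m) f 0) / fact m"
      by (simp add: e_def norm_divide)
    also have "\<dots> \<le> (real m + 1) / (2 * real m)"
      using h mpos by (simp add: field_simps)
    also have "\<dots> \<le> c" unfolding c_def using m assms(9)
      by (simp add: field_simps)
    finally show ?thesis .
  qed
  have S2: "(\<lambda>i. e (i + n) * z^(i + n)) sums (deriv f z - deriv (partial_sum f n) z)"
    unfolding sn by (rule sums_split_initial_segment[OF S])
  have geo: "(\<lambda>i. c * t^n * t^i) sums (c * t^n * (1 / (1 - t)))"
    by (intro sums_mult geometric_sums) (use t0 t1 in simp)
  have err: "norm (deriv f z - deriv (partial_sum f n) z) \<le> c * t^n / (1 - t)"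
  proof -
    have "norm (deriv f z - deriv (partial_sum f n) z) = norm (\<Sum>i. e (i + n) * z^(i + n))"
      using S2 by (simp add: sums_iff)
    also have "\<dots> \<le> (\<Sum>i. c * t^n * t^i)"
    proof (rule norm_suminf_le)
      fix i
      have "norm (e (i + n) * z^(i + n)) = norm (e (i+n)) * t^(i+n)"
        by (simp add: norm_mult norm_power t_def)
      also have "\<dots> \<le> c * t^(i+n)"
        using eb[of "i+n"] t0 by (intro mult_right_mono) auto
      finally show "norm (e (i + n) * z^(i + n)) \<le> c * t^n * t^i"
        by (simp add: power_add mult_ac)
    qed (use geo in \<open>simp add: sums_iff\<close>)
    also have "\<dots> = c * t^n / (1 - t)" using geo by (simp add: sums_iff)
    finally show ?thesis .
  qed
  have dl: "norm (deriv f z) \<ge> 1 - t"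
    unfolding t_def by (rule deriv_lower[OF holf f0 f1 hphi eq]) (use t1 in \<open>simp add: t_def\<close>)
  have dpos: "norm (deriv f z) > 0" using dl t1 by linarith
  then have dnz: "deriv f z \<noteq> 0" by auto
  have "norm (deriv (partial_sum f n) z / deriv f z - 1)
      = norm (deriv f z - deriv (partial_sum f n) z) / norm (deriv f z)"
    using dnz by (simp add: field_simps norm_divide norm_minus_commute)
  also have "\<dots> \<le> (c * t^n / (1 - t)) / (1 - t)"
  proof -
    have "c \<ge> 0" by (simp add: c_def)
    then have "0 \<le> c * t ^ n / (1 - t)" using t0 t1 by simp
    then show ?thesis using err dl t1 t0 dpos by (intro frac_le) auto
  qed
  also have "\<dots> \<le> t^n * (c + (sqrt (2 * r - r^2) / (2 * (1 - r) * r ^ n)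
             * (real n + 1 + ln (real n - 1) + euler_mascheroni)) * t / (r - t))"
    unfolding c_def
  proof (rule final_ineq[OF t0 tr assms(8) assms(9)])
    have r0: "0 < r" by fact
    have r2: "r^2 \<le> 2 * r" using r0 assms(8) by (simp add: power2_eq_square)
    have sq: "sqrt (2 * r - r^2) \<ge> r"
      using r0 assms(8) by (intro real_le_rsqrt) (simp add: power2_eq_square algebra_simps)
    have rn: "r ^ n \<le> 1" using r0 assms(8) by (intro power_le_one) auto
    have rn0: "r ^ n > 0" using r0 by simp
    have L: "real n + 1 + ln (real n - 1) + euler_mascheroni \<ge> real n + 1"
      using euler_mascheroni_pos assms(9) by (simp add: ln_ge_zero)
    have "r * (real n + 1) / (2 * (1 - r)) \<le> sqrt (2 * r - r^2) / (2 * (1 - r)) * (real n + 1)"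
    proof -
      have "r * (real n + 1) \<le> sqrt (2 * r - r^2) * (real n + 1)"
        using sq by (intro mult_right_mono) auto
      then have "r * (real n + 1) / (2 * (1 - r)) \<le> sqrt (2 * r - r^2) * (real n + 1) / (2 * (1 - r))"
        using assms(8) by (intro divide_right_mono) auto
      then show ?thesis by simp
    qed
    also have "\<dots> \<le> sqrt (2 * r - r^2) / (2 * (1 - r) * r ^ n) * (real n + 1)"
    proof -
      have "r^2 \<le> 2 * r" using r0 assms(8) by (simp add: power2_eq_square)
      then show ?thesis
        using rn rn0 assms(8) by (intro mult_right_mono divide_left_mono) (auto intro: mult_pos_pos)
    qed
    also have "\<dots> \<le> sqrt (2 * r - r^2) / (2 * (1 - r) * r ^ n) * (real n + 1 + ln (real n - 1) + euler_mascheroni)"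
    proof -
      have "0 \<le> sqrt (2 * r - r^2) / (2 * (1 - r) * r ^ n)"
        using rn0 assms(8) r2 by (intro divide_nonneg_pos) auto
      then show ?thesis using L by (intro mult_left_mono) auto
    qed
    finally show "sqrt (2 * r - r^2) / (2 * (1 - r) * r ^ n) * (real n + 1 + ln (real n - 1) + euler_mascheroni)
       \<ge> r * (real n + 1) / (2 * (1 - r))" .
  qed
  finally show ?thesis unfolding t_def c_def .
qed

end
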